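(* Let $\kappa$ be a probability density on $\mathbb{R}^d$ with $|h_2(\kappa)|\le A_{\kappa,2}$, let $\theta\in(0,1)$, let $Z_1,\dots,Z_n\in\mathbb{R}^d$, and let $(a_1,\dots,a_n)$ be a probability vector with $a_i\ge\epsilon>0$ for all $i\in[n]$. Let $\tilde Z_n$ have density $\mu_{\tilde Z_n}=\frac1{\theta^d}\sum_{i=1}^n a_i\kappa_{\theta,Z_i}$, where $\kappa_{\theta,z}(x)=\kappa\left(\frac{x-z}{\theta}\right)$. Then \[ |h_2(\tilde Z_n)|\le A_{\kappa,2}+d\log\tfrac1\theta+2\log\tfrac1\epsilon. \]
   Context: $h_2(f)=-\log\int f^2$ is the second-order differential Rényi entropy; $h_2(\tilde Z_n)$ means $h_2(\mu_{\tilde Z_n})$. *)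

theory Defs
  imports "HOL-Analysis.Analysis"
begin

definition is_prob_density :: "('a::euclidean_space \<Rightarrow> real) \<Rightarrow> bool" where
  "is_prob_density f \<longleftrightarrow> f \<in> borel_measurable lborel \<and> (\<forall>x. 0 \<le> f x)
      \<and> integrable lborel f \<and> (LINT x|lborel. f x) = 1"

definition renyi2 :: "('a::euclidean_space \<Rightarrow> real) \<Rightarrow> real" where
  "renyi2 f = - ln (LINT x|lborel. (f x)\<^sup>2)"

definition kernel_shift :: "('a::euclidean_space \<Rightarrow> real) \<Rightarrow> real \<Rightarrow> 'a \<Rightarrow> 'a \<Rightarrow> real" where
  "kernel_shift \<kappa> \<theta> z x = \<kappa> ((x - z) /\<^sub>R \<theta>)"

end

theory Submission imports Defs begin
lemma aff_int:
  fixes f :: "'a::euclidean_space \<Rightarrow> real" and c :: real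
  assumes f: "integrable lborel f" and c: "c \<noteq> 0"
  shows "integrable lborel (\<lambda>x. f (t + c *\<^sub>R x))"
    and "(\<integral>x. f x \<partial>lborel) = \<bar>c\<bar>^DIM('a) * (\<integral>x. f (t + c *\<^sub>R x) \<partial>lborel)"
proof -
  have [measurable]: "f \<in> borel_measurable borel" using f by auto
  have "(\<integral>\<^sup>+x. ennreal (norm (f x)) \<partial>lborel) = ennreal (\<bar>c\<bar>^DIM('a)) * (\<integral>\<^sup>+x. ennreal (norm (f (t + c *\<^sub>R x))) \<partial>lborel)"
    by (subst lborel_affine[OF c, of t]) (simp add: nn_integral_density nn_integral_distr nn_integral_cmult)
  moreover have "(\<integral>\<^sup>+x. ennreal (norm (f x)) \<partial>lborel) < \<infinity>" using f unfolding integrable_iff_bounded by auto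
  ultimately have "(\<integral>\<^sup>+x. ennreal (norm (f (t + c *\<^sub>R x))) \<partial>lborel) < \<infinity>"
    using c by (auto simp: ennreal_mult_less_top)
  then show fi: "integrable lborel (\<lambda>x. f (t + c *\<^sub>R x))"
    unfolding integrable_iff_bounded by auto
  show "(\<integral>x. f x \<partial>lborel) = \<bar>c\<bar>^DIM('a) * (\<integral>x. f (t + c *\<^sub>R x) \<partial>lborel)"
    using c f fi by (subst lborel_affine[OF c, of t]) (simp add: integral_density integral_distr)
qed
lemma kern_int:
  fixes \<kappa> :: "'a::euclidean_space \<Rightarrow> real"
  assumes f: "integrable lborel (\<lambda>x. (\<kappa> x)\<^sup>2)" and th: "0 < \<theta>"
  shows "integrable lborel (\<lambda>x. (kernel_shift \<kappa> \<theta> z x)\<^sup>2)"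
    and "(\<integral>x. (kernel_shift \<kappa> \<theta> z x)\<^sup>2 \<partial>lborel) = \<theta>^DIM('a) * (\<integral>x. (\<kappa> x)\<^sup>2 \<partial>lborel)"
proof -
  have eq: "kernel_shift \<kappa> \<theta> z x = \<kappa> ((- (z /\<^sub>R \<theta>)) + (inverse \<theta>) *\<^sub>R x)" for x
    unfolding kernel_shift_def by (simp add: scaleR_diff_right algebra_simps)
  have c: "inverse \<theta> \<noteq> 0" using th by simp
  show "integrable lborel (\<lambda>x. (kernel_shift \<kappa> \<theta> z x)\<^sup>2)"
    unfolding eq using aff_int(1)[OF f c] .
  have "(\<integral>x. (\<kappa> x)\<^sup>2 \<partial>lborel) = (inverse \<theta>)^DIM('a) * (\<integral>x. (kernel_shift \<kappa> \<theta> z x)\<^sup>2 \<partial>lborel)"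
    unfolding eq using aff_int(2)[OF f c, of "- (z /\<^sub>R \<theta>)"] th by (simp add: algebra_simps)
  then show "(\<integral>x. (kernel_shift \<kappa> \<theta> z x)\<^sup>2 \<partial>lborel) = \<theta>^DIM('a) * (\<integral>x. (\<kappa> x)\<^sup>2 \<partial>lborel)"
    using th by (simp add: field_simps power_inverse)
qed

lemma jensen_sq:
  fixes a u :: "nat \<Rightarrow> real"
  assumes "(\<Sum>i<n. a i) = 1" and that: "\<forall>i<n. 0 \<le> a i"
  shows "(\<Sum>i<n. a i * u i)\<^sup>2 \<le> (\<Sum>i<n. a i * (u i)\<^sup>2)"
proof -
  define g where "g = (\<Sum>i<n. a i * u i)"
  have "0 \<le> (\<Sum>i<n. a i * (u i - g)\<^sup>2)" using that by (auto intro!: sum_nonneg)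
  also have "(\<Sum>i<n. a i * (u i - g)\<^sup>2) = (\<Sum>i<n. a i * (u i)\<^sup>2) - 2 * g * (\<Sum>i<n. a i * u i) + g\<^sup>2 * (\<Sum>i<n. a i)"
    by (simp add: power2_diff algebra_simps sum.distrib sum_subtractf sum_distrib_left sum_distrib_right)
  finally show ?thesis using assms unfolding g_def by (simp add: power2_eq_square)
qed

lemma sq_sum_ge:
  fixes u :: "nat \<Rightarrow> real"
  shows "(\<forall>i<n. 0 \<le> u i) \<Longrightarrow> (\<Sum>i<n. (u i)\<^sup>2) \<le> (\<Sum>i<n. u i)\<^sup>2"
proof (induction n)
  case 0 then show ?case by simp
next
  case (Suc n)
  have "0 \<le> (\<Sum>i<n. u i)" using Suc.prems by (auto intro!: sum_nonneg)
  moreover have "0 \<le> u n" using Suc.prems by auto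
  ultimately have "0 \<le> 2 * (\<Sum>i<n. u i) * u n" by simp
  then show ?case using Suc by (simp add: power2_sum mult_ac)
qed

theorem lemma24:
  fixes \<kappa> :: "'a::euclidean_space \<Rightarrow> real"
    and A \<theta> \<epsilon> :: real
    and n :: nat
    and Z :: "nat \<Rightarrow> 'a"
    and a :: "nat \<Rightarrow> real"
  assumes dens: "is_prob_density \<kappa>"
    and sq_int: "integrable lborel (\<lambda>x. (\<kappa> x)\<^sup>2)"
    and hk: "\<bar>renyi2 \<kappa>\<bar> \<le> A"
    and theta: "0 < \<theta>" "\<theta> < 1"
    and eps: "0 < \<epsilon>"
    and a_ge: "\<forall>i<n. \<epsilon> \<le> a i"
    and a_sum: "(\<Sum>i<n. a i) = 1"
  shows "\<bar>renyi2 (\<lambda>x. (1 / \<theta> ^ DIM('a)) * (\<Sum>i<n. a i * kernel_shift \<kappa> \<theta> (Z i) x))\<bar>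
           \<le> A + real DIM('a) * ln (1 / \<theta>) + 2 * ln (1 / \<epsilon>)"
proof -
  define d where "d = DIM('a)"
  define k where "k i x = kernel_shift \<kappa> \<theta> (Z i) x" for i x
  define g where "g x = (\<Sum>i<n. a i * k i x)" for x
  define K where "K = (\<integral>x. (\<kappa> x)\<^sup>2 \<partial>lborel)"
  define I where "I = (\<integral>x. ((1 / \<theta> ^ d) * g x)\<^sup>2 \<partial>lborel)"
  have meas[measurable]: "\<kappa> \<in> borel_measurable borel" using dens unfolding is_prob_density_def by auto
  have kpos: "0 \<le> \<kappa> x" for x using dens unfolding is_prob_density_def by auto
  have kmeas[measurable]: "k i \<in> borel_measurable lborel" for i
    unfolding k_def kernel_shift_def by measurable
  have knn: "0 \<le> k i x" for i x unfolding k_def kernel_shift_def using kpos by auto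
  have anng: "\<forall>i<n. 0 \<le> a i" using a_ge eps by force
  have n0: "n > 0" using a_sum by (cases n) auto
  have eps1: "\<epsilon> \<le> 1"
  proof -
    have "a 0 \<le> (\<Sum>i<n. a i)" using anng n0 by (intro member_le_sum) auto
    then show ?thesis using a_ge n0 a_sum by force
  qed
  have K0: "0 \<le> K" unfolding K_def by simp
  have ik: "integrable lborel (\<lambda>x. (k i x)\<^sup>2)" for i unfolding k_def using kern_int(1)[OF sq_int theta(1)] .
  have iki: "(\<integral>x. (k i x)\<^sup>2 \<partial>lborel) = \<theta>^d * K" for i
    unfolding k_def K_def d_def using kern_int(2)[OF sq_int theta(1)] .
  define B where "B x = (\<Sum>i<n. a i * (k i x)\<^sup>2)" for x
  have iB: "integrable lborel B" unfolding B_def using ik by auto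
  have intB: "(\<integral>x. B x \<partial>lborel) = \<theta>^d * K"
    unfolding B_def using ik by (simp add: iki flip: sum_distrib_right) (simp add: a_sum)
  have up: "(g x)\<^sup>2 \<le> B x" for x unfolding g_def B_def by (rule jensen_sq[OF a_sum anng])
  have lo: "\<epsilon> * B x \<le> (g x)\<^sup>2" for x
  proof -
    have "\<epsilon> * B x = (\<Sum>i<n. \<epsilon> * a i * (k i x)\<^sup>2)" unfolding B_def by (simp add: sum_distrib_left mult.assoc)
    also have "\<dots> \<le> (\<Sum>i<n. (a i * k i x)\<^sup>2)"
    proof (rule sum_mono)
      fix i assume "i \<in> {..<n}"
      then have "\<epsilon> * a i \<le> a i * a i" using a_ge anng by (simp add: mult_right_mono)
      then have "\<epsilon> * a i * (k i x)\<^sup>2 \<le> (a i * a i) * (k i x)\<^sup>2"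
        by (rule mult_right_mono) simp
      moreover have "(a i * k i x)\<^sup>2 = (a i * a i) * (k i x)\<^sup>2"
        by (simp add: power2_eq_square)
      ultimately show "\<epsilon> * a i * (k i x)\<^sup>2 \<le> (a i * k i x)\<^sup>2" by simp
    qed
    also have "\<dots> \<le> (g x)\<^sup>2" unfolding g_def using anng knn by (intro sq_sum_ge) auto
    finally show ?thesis .
  qed
  have gmeas[measurable]: "g \<in> borel_measurable lborel" unfolding g_def by measurable
  have ig: "integrable lborel (\<lambda>x. (g x)\<^sup>2)"
    by (rule Bochner_Integration.integrable_bound[OF iB]) (use up in \<open>auto intro!: AE_I2 order_trans[OF up] simp: abs_le_iff\<close>)
  have Ieq: "I = (1/\<theta>^d)\<^sup>2 * (\<integral>x. (g x)\<^sup>2 \<partial>lborel)" unfolding I_def power_mult_distrib by (rule integral_mult_right_zero)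
  have gup: "(\<integral>x. (g x)\<^sup>2 \<partial>lborel) \<le> \<theta>^d * K"
    using integral_mono[OF ig iB up] intB by simp
  have glo: "\<epsilon> * (\<theta>^d * K) \<le> (\<integral>x. (g x)\<^sup>2 \<partial>lborel)"
    using integral_mono[OF _ ig lo] iB intB by simp
  have tpos: "0 < \<theta>^d" using theta by simp
  define M where "M = K / \<theta>^d"
  have Iup: "I \<le> M" unfolding Ieq M_def using gup tpos K0
    by (simp add: power2_eq_square field_simps)
  have Ilo: "\<epsilon> * M \<le> I" unfolding Ieq M_def using glo tpos K0
    by (simp add: power2_eq_square field_simps)
  have L0: "0 \<le> real d * ln (1/\<theta>)" using theta by simp
  have E0: "0 \<le> ln (1/\<epsilon>)" using eps eps1 by simp
  have A0: "0 \<le> A" using hk by linarith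
  have rf: "renyi2 (\<lambda>x. (1 / \<theta> ^ DIM('a)) * (\<Sum>i<n. a i * kernel_shift \<kappa> \<theta> (Z i) x)) = - ln I"
    unfolding renyi2_def I_def g_def k_def d_def ..
  have rk: "renyi2 \<kappa> = - ln K" unfolding renyi2_def K_def ..
  show ?thesis
  proof (cases "K = 0")
    case True
    then have "I = 0" using Iup Ilo eps unfolding M_def by simp
    then have "renyi2 (\<lambda>x. (1 / \<theta> ^ DIM('a)) * (\<Sum>i<n. a i * kernel_shift \<kappa> \<theta> (Z i) x)) = 0"
      using rf by simp
    then show ?thesis using L0 E0 A0 unfolding d_def by linarith
  next
    case False
    then have Kp: "0 < K" using K0 by simp
    then have Mp: "0 < M" unfolding M_def using tpos by simp
    have Ip: "0 < I" using Ilo Mp eps by (meson mult_pos_pos order_less_le_trans)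
    have lnM: "ln M = ln K + real d * ln (1/\<theta>)"
      unfolding M_def using Kp tpos theta by (simp add: ln_div ln_realpow)
    have "ln I \<le> ln M" using Iup Ip by simp
    moreover have "ln (\<epsilon> * M) \<le> ln I" using Ilo Ip Mp eps by simp
    moreover have "ln (\<epsilon> * M) = ln \<epsilon> + ln M" using Mp eps by (simp add: ln_mult)
    moreover have "ln (1/\<epsilon>) = - ln \<epsilon>" using eps by (simp add: ln_div)
    ultimately have "\<bar>- ln I\<bar> \<le> A + real d * ln (1 / \<theta>) + 2 * ln (1 / \<epsilon>)"
      using hk rk lnM L0 E0 by (simp add: abs_le_iff)
    then show ?thesis using rf unfolding d_def by simp
  qed
qed

end
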